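(* Let $f=(f_1,f_2):\mathbb{R}^2\times\mathbb{R}^2\to\mathbb{R}^2$ be continuously differentiable with variables $(x,y_1,y_2)$, $x\in\mathbb{R}^2$, and let $(a,b)$, $b=(b_1,b_2)$, satisfy $f(a,b)=(0,0)$ and $\det J_{f,y}(a,b)\ne0$, where $J_{f,y}=(\partial_{y_j}f_i)_{i,j}$. Then there exist a closed rectangle $R\subset\mathbb{R}^2$ containing $a$, closed intervals $V_1\ni b_1$, $V_2\ni b_2$ (put $V=V_1\times V_2$), indices $j\ne j'$ in $\{1,2\}$, and functions $p:R\times V_{j'}\to V_j$ and $q:R\to V_{j'}$ such that for all $x\in R$, $f(x,y)=(0,0)$ where $y_{j'}=q(x)$ and $y_j=p(x,q(x))$; moreover $p$ and $q$ are the limits, in the $\Gamma$-Cesàro sense, of their dyadic block-moment polynomial approximants $p_n=P_n(p)$ and $q_m=P_m(q)$ as $n,m\to\infty$.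
   Context: Rectangles/boxes are parallel to coordinate axes. For a closed box $Q=\prod_{k=1}^d[l_k,l_k+s_k]\subset\mathbb{R}^d$ and $n\ge0$, $\Gamma_n$ is the dyadic partition of $Q$ into the $2^{nd}$ boxes $\prod_k[l_k+(i_k-1)s_k2^{-n},\,l_k+i_ks_k2^{-n}]$, $1\le i_k\le 2^n$. For a continuous $h:Q\to\mathbb{R}$ and a base point $c\in Q$, $P_n(h)$ denotes the unique polynomial of degree at most $2^n-1$ in each variable $(z_k-c_k)$ such that $\int_B P_n(h)=\int_B h$ for every $B\in\Gamma_n$ (uniqueness follows from the invertibility of the matrices $\big(\int_{I_i}(t-c_k)^{j-1}dt\big)_{i,j}$ over the dyadic subintervals $I_i$). A sequence of integrable functions $h_n$ converges to $h$ in the $\Gamma$-Cesàro sense if for every $z\in Q$ and $\epsilon>0$ there is $N$ such that for all $n\ge N$ and every $B\in\Gamma_n$ containing $z$, $\left|\frac{1}{|B|}\int_B h_n-h(z)\right|<\epsilon$. Here $p$ is considered on the box $R\times V_{j'}\subset\mathbb{R}^3$ with base point $(a,b_{j'})$ and $q$ on $R$ with base point $a$. *)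

theory Defs
  imports "HOL-Analysis.Analysis"
begin

text \<open>A closed box Q = prod_k [l_k, l_k + s_k] is described by its corner l and side vector s.\<close>

definition dyadic_boxes :: "real^'d \<Rightarrow> real^'d \<Rightarrow> nat \<Rightarrow> (real^'d) set set" where
  "dyadic_boxes l s n =
     {cbox (\<chi> k. l$k + (real (i k) - 1) * s$k / 2^n) (\<chi> k. l$k + real (i k) * s$k / 2^n)
        | i :: 'd \<Rightarrow> nat. \<forall>k. 1 \<le> i k \<and> i k \<le> 2^n}"

definition tensor_poly :: "real^'d \<Rightarrow> nat \<Rightarrow> (real^'d \<Rightarrow> real) \<Rightarrow> bool" where
  "tensor_poly c N P \<longleftrightarrow>
     (\<exists>coef :: ('d \<Rightarrow> nat) \<Rightarrow> real. \<forall>z. P z =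
        (\<Sum>\<alpha>\<in>{\<alpha> :: 'd \<Rightarrow> nat. \<forall>k. \<alpha> k \<le> N}. coef \<alpha> * (\<Prod>k\<in>UNIV. (z$k - c$k) ^ (\<alpha> k))))"

definition block_moment_poly ::
  "real^'d \<Rightarrow> real^'d \<Rightarrow> real^'d \<Rightarrow> nat \<Rightarrow> (real^'d \<Rightarrow> real) \<Rightarrow> (real^'d \<Rightarrow> real)" where
  "block_moment_poly l s c n h =
     (THE P. tensor_poly c (2^n - 1) P \<and> (\<forall>B\<in>dyadic_boxes l s n. integral B P = integral B h))"

definition gamma_cesaro :: "real^'d \<Rightarrow> real^'d \<Rightarrow> (nat \<Rightarrow> real^'d \<Rightarrow> real) \<Rightarrow> (real^'d \<Rightarrow> real) \<Rightarrow> bool" where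
  "gamma_cesaro l s hs h \<longleftrightarrow>
     (\<forall>z\<in>cbox l (l + s). \<forall>\<epsilon>>0. \<exists>N. \<forall>n\<ge>N. \<forall>B\<in>dyadic_boxes l s n.
        z \<in> B \<longrightarrow> \<bar>integral B (hs n) / Henstock_Kurzweil_Integration.content B - h z\<bar> < \<epsilon>)"

definition ext3 :: "real^2 \<Rightarrow> real \<Rightarrow> real^3" where
  "ext3 x t = vector [x$1, x$2, t]"

end

theory Submission
  imports Defs "HOL-Computational_Algebra.Polynomial"
begin

lemma prod_integral_box:
  fixes u v :: "real^'d" and g :: "'d \<Rightarrow> real \<Rightarrow> real"
  assumes cont: "\<And>k. continuous_on UNIV (g k)"
  shows "((\<lambda>z. \<Prod>k\<in>UNIV. g k (z$k)) has_integral (\<Prod>k\<in>UNIV. integral {u$k..v$k} (g k))) (cbox u v)"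
proof -
  define G where "G k x = indicator {u$k..v$k} x * g k x" for k x
  have intG: "integrable lborel (G k)" for k
    unfolding G_def using borel_integrable_compact[of "{u$k..v$k}" "g k"]
      continuous_on_subset[OF cont] by simp
  have GL: "integral\<^sup>L lborel (G k) = integral {u$k..v$k} (g k)" for k
  proof -
    have "set_integrable lborel {u$k..v$k} (g k)"
      by (rule borel_integrable_atLeastAtMost') (rule continuous_on_subset[OF cont], simp)
    from set_borel_integral_eq_integral(2)[OF this] show ?thesis
      by (simp add: G_def[abs_def] set_lebesgue_integral_def)
  qed
  have ind: "indicator (cbox u v) z *\<^sub>R (\<Prod>k\<in>UNIV. g k (z$k)) = (\<Prod>k\<in>UNIV. G k (z$k))" for z
  proof (cases "z \<in> cbox u v")
    case True
    then show ?thesis by (simp add: G_def mem_box_cart indicator_def)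
  next
    case False
    then obtain k where "\<not> (u$k \<le> z$k \<and> z$k \<le> v$k)" by (auto simp: mem_box_cart)
    then have "G k (z$k) = 0" by (simp add: G_def)
    then have "(\<Prod>k\<in>UNIV. G k (z$k)) = 0" by (meson UNIV_I finite prod_zero)
    with False show ?thesis by simp
  qed
  define kof where "kof b = (SOME k::'d. axis k (1::real) = b)" for b :: "real^'d"
  have kof: "kof (axis k 1) = k" for k
    unfolding kof_def by (rule someI2[of _ k]) (auto simp: axis_eq_axis)
  have injax: "inj (\<lambda>k::'d. axis k (1::real))"
    by (auto simp: inj_def axis_eq_axis)
  have Bas: "(Basis :: (real^'d) set) = range (\<lambda>k. axis k 1)"
    by (auto simp: Basis_vec_def)
  have reidx: "(\<Prod>b\<in>Basis. F b) = (\<Prod>k\<in>UNIV. F (axis k 1))" for F :: "real^'d \<Rightarrow> real"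
    unfolding Bas by (subst prod.reindex[OF injax]) simp_all
  have comp: "(\<Sum>b\<in>Basis. x b *\<^sub>R b) $ k = x (axis k 1)" for x :: "real^'d \<Rightarrow> real" and k
  proof -
    have "(\<Sum>b\<in>Basis. x b *\<^sub>R b) $ k = (\<Sum>b\<in>Basis. x b *\<^sub>R b) \<bullet> axis k 1"
      by (simp add: cart_eq_inner_axis)
    also have "\<dots> = (\<Sum>b\<in>Basis. x b * (b \<bullet> axis k 1))"
      by (simp add: inner_sum_left)
    also have "\<dots> = (\<Sum>b\<in>Basis. if b = axis k 1 then x b else 0)"
      by (intro sum.cong refl) (auto simp: inner_Basis axis_in_Basis_iff)
    also have "\<dots> = x (axis k 1)"
      by (simp add: axis_in_Basis_iff)
    finally show ?thesis .
  qed
  interpret P: product_sigma_finite "\<lambda>_::real^'d. lborel :: real measure"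
    by (simp add: product_sigma_finite_def sigma_finite_lborel)
  have meas: "(\<lambda>z::real^'d. \<Prod>k\<in>UNIV. G k (z$k)) \<in> borel_measurable borel"
    using intG by measurable
  have "integral\<^sup>L lborel (\<lambda>z::real^'d. \<Prod>k\<in>UNIV. G k (z$k))
      = integral\<^sup>L (distr (\<Pi>\<^sub>M b\<in>Basis. lborel) borel (\<lambda>f. \<Sum>b\<in>Basis. f b *\<^sub>R b)) (\<lambda>z::real^'d. \<Prod>k\<in>UNIV. G k (z$k))"
    by (subst lborel_eq[where 'a="real^'d"]) (rule refl)
  also have "\<dots> = integral\<^sup>L (\<Pi>\<^sub>M b\<in>Basis. lborel) (\<lambda>x. \<Prod>k\<in>UNIV. G k ((\<Sum>b\<in>Basis. x b *\<^sub>R b)$k))"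
    by (rule integral_distr[OF _ meas]) measurable
  also have "\<dots> = integral\<^sup>L (\<Pi>\<^sub>M b\<in>Basis. lborel) (\<lambda>x. \<Prod>b\<in>Basis. G (kof b) (x b))"
    unfolding comp reidx kof ..
  also have "\<dots> = (\<Prod>b\<in>Basis. integral\<^sup>L lborel (G (kof b)))"
    by (rule P.product_integral_prod) (simp_all add: intG)
  also have "\<dots> = (\<Prod>k\<in>UNIV. integral {u$k..v$k} (g k))"
    by (simp add: reidx kof GL)
  finally have eq: "integral\<^sup>L lborel (\<lambda>z::real^'d. \<Prod>k\<in>UNIV. G k (z$k)) = (\<Prod>k\<in>UNIV. integral {u$k..v$k} (g k))" .
  have cprod: "continuous_on (cbox u v) (\<lambda>z. \<Prod>k\<in>UNIV. g k (z$k))"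
    by (intro continuous_intros continuous_on_compose2[OF cont]) auto
  have "integrable lborel (\<lambda>z. indicator (cbox u v) z *\<^sub>R (\<Prod>k\<in>UNIV. g k (z$k)))"
    by (rule borel_integrable_compact[OF compact_cbox cprod])
  from has_integral_integral_lborel[OF this]
  have "((\<lambda>z. indicator (cbox u v) z *\<^sub>R (\<Prod>k\<in>UNIV. g k (z$k))) has_integral (\<Prod>k\<in>UNIV. integral {u$k..v$k} (g k))) UNIV"
    by (simp only: ind eq)
  moreover have "(\<lambda>z. indicator (cbox u v) z *\<^sub>R (\<Prod>k\<in>UNIV. g k (z$k))) = (\<lambda>z. if z \<in> cbox u v then (\<Prod>k\<in>UNIV. g k (z$k)) else 0)"
    by (auto simp: indicator_def)
  ultimately show ?thesis
    by (simp add: has_integral_restrict_UNIV)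
qed

definition poly1 :: "real \<Rightarrow> nat \<Rightarrow> (real \<Rightarrow> real) \<Rightarrow> bool" where
  "poly1 c N e \<longleftrightarrow> (\<exists>a. \<forall>x. e x = (\<Sum>j\<le>N. a j * (x - c)^j))"

lemma poly1_to_poly:
  assumes "poly1 c N e"
  shows "\<exists>P. degree P \<le> N \<and> (\<forall>x. e x = poly P x)"
proof -
  obtain a where a: "\<And>x. e x = (\<Sum>j\<le>N. a j * (x - c)^j)" using assms poly1_def by auto
  define P where "P = (\<Sum>j\<le>N. smult (a j) ([:-c,1:]^j))"
  have "degree P \<le> N" unfolding P_def
    by (rule degree_sum_le) (auto intro: order.trans[OF degree_smult_le] simp: degree_linear_power)
  moreover have "e x = poly P x" for x
    by (simp add: a P_def poly_sum)
  ultimately show ?thesis by blast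
qed

lemma poly_to_poly1:
  assumes "degree P \<le> N"
  shows "poly1 c N (poly P)"
proof -
  define P' where "P' = pcompose P [:c,1:]"
  have dP': "degree P' \<le> N" using assms by (simp add: P'_def degree_pcompose)
  have "poly P x = (\<Sum>j\<le>N. coeff P' j * (x - c)^j)" for x
  proof -
    have "poly P x = poly P' (x - c)" by (simp add: P'_def poly_pcompose)
    also have "\<dots> = (\<Sum>j\<le>degree P'. coeff P' j * (x - c)^j)" by (rule poly_altdef)
    also have "\<dots> = (\<Sum>j\<le>N. coeff P' j * (x - c)^j)"
      by (rule sum.mono_neutral_left) (use dP' in \<open>auto simp: coeff_eq_0\<close>)
    finally show ?thesis .
  qed
  then show ?thesis unfolding poly1_def by blast
qed

lemma pderiv_sum': "pderiv (sum f A) = (\<Sum>x\<in>A. pderiv (f x))"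
  using higher_pderiv_sum[of 1 f A] by simp

lemma ftc_poly:
  fixes Q :: "real poly"
  assumes "a \<le> b"
  shows "integral {a..b} (poly (pderiv Q)) = poly Q b - poly Q a"
proof -
  have "(poly (pderiv Q) has_integral (poly Q b - poly Q a)) {a..b}"
    by (rule fundamental_theorem_of_calculus[OF assms])
       (simp add: has_real_derivative_iff_has_vector_derivative[symmetric] DERIV_subset[OF poly_DERIV])
  then show ?thesis by (rule integral_unique)
qed

lemma antideriv_poly:
  fixes P :: "real poly"
  shows "\<exists>Q. pderiv Q = P \<and> degree Q \<le> Suc (degree P)"
proof -
  define Q where "Q = (\<Sum>j\<le>degree P. monom (coeff P j / real (Suc j)) (Suc j))"
  have "pderiv Q = (\<Sum>j\<le>degree P. monom (coeff P j) j)"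
    unfolding Q_def pderiv_sum' by (simp add: pderiv_monom)
  also have "\<dots> = P" by (rule poly_as_sum_of_monoms)
  finally have "pderiv Q = P" .
  moreover have "degree Q \<le> Suc (degree P)" unfolding Q_def
    by (rule degree_sum_le) (auto intro: order.trans[OF degree_monom_le])
  ultimately show ?thesis by blast
qed

lemma lagrange:
  fixes t :: "nat \<Rightarrow> real"
  assumes inj: "inj_on t {0..M}"
  shows "\<exists>Q. degree Q \<le> M \<and> (\<forall>r\<le>M. poly Q (t r) = v r)"
proof -
  define L where "L r = (\<Prod>r'\<in>{0..M}-{r}. [:-t r', 1:])" for r
  have polyL: "poly (L r) x = (\<Prod>r'\<in>{0..M}-{r}. x - t r')" for r x
    by (simp add: L_def poly_prod)
  have degL: "degree (L r) \<le> M" if "r \<le> M" for r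
  proof -
    have "degree (L r) \<le> sum (degree \<circ> (\<lambda>r'. [:-t r', 1:])) ({0..M}-{r})"
      unfolding L_def by (rule degree_prod_sum_le) simp
    also have "\<dots> = card ({0..M}-{r})" by simp
    also have "\<dots> \<le> M" using that by simp
    finally show ?thesis .
  qed
  define Q where "Q = (\<Sum>r\<le>M. smult (v r / poly (L r) (t r)) (L r))"
  have "degree Q \<le> M" unfolding Q_def
    by (rule degree_sum_le) (auto intro: order.trans[OF degree_smult_le] degL)
  moreover have "poly Q (t r0) = v r0" if "r0 \<le> M" for r0
  proof -
    have z: "poly (L r) (t r0) = 0" if "r \<le> M" "r \<noteq> r0" for r
      unfolding polyL using that \<open>r0 \<le> M\<close> by (intro prod_zero) auto
    have nz: "poly (L r0) (t r0) \<noteq> 0"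
      unfolding polyL using inj \<open>r0 \<le> M\<close> by (auto simp: inj_on_def)
    have "poly Q (t r0) = (\<Sum>r\<le>M. v r / poly (L r) (t r) * poly (L r) (t r0))"
      by (simp add: Q_def poly_sum)
    also have "\<dots> = (\<Sum>r\<le>M. if r = r0 then v r0 else 0)"
      by (rule sum.cong) (use z nz in auto)
    also have "\<dots> = v r0" using that by simp
    finally show ?thesis .
  qed
  ultimately show ?thesis by blast
qed

lemma moment_uniq_1d:
  fixes t :: "nat \<Rightarrow> real"
  assumes mono: "strict_mono t" and M: "1 \<le> M"
    and e: "poly1 c (M - 1) e"
    and int0: "\<And>i. 1 \<le> i \<Longrightarrow> i \<le> M \<Longrightarrow> integral {t (i - 1)..t i} e = 0"
  shows "e x = 0"
proof -
  obtain P where dP: "degree P \<le> M - 1" and eP: "\<And>x. e x = poly P x"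
    using poly1_to_poly[OF e] by blast
  obtain Q where QP: "pderiv Q = P" and dQ: "degree Q \<le> Suc (degree P)"
    using antideriv_poly by blast
  have dQM: "degree Q \<le> M" using dQ dP M by linarith
  have inj: "inj_on t {0..M}"
    using mono strict_mono_imp_inj_on by blast
  have Qc: "poly Q (t r) = poly Q (t 0)" if "r \<le> M" for r
    using that
  proof (induction r)
    case (Suc r)
    have le: "t r \<le> t (Suc r)" using mono by (simp add: strict_mono_def less_imp_le)
    have "integral {t r..t (Suc r)} e = 0" using int0[of "Suc r"] Suc.prems by simp
    moreover have "integral {t r..t (Suc r)} e = poly Q (t (Suc r)) - poly Q (t r)"
      using ftc_poly[OF le, of Q] by (simp add: QP eP[abs_def])
    ultimately show ?case using Suc by simp
  qed simp
  define R where "R = Q - [:poly Q (t 0):]"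
  have "R = 0"
  proof (rule ccontr)
    assume R0: "R \<noteq> 0"
    have c0: "card {x. poly R x = 0} \<le> degree R" by (rule card_poly_roots_bound[OF R0])
    have dR: "degree R \<le> M" unfolding R_def
      by (rule degree_diff_le[OF dQM]) simp
    have fin: "finite {x. poly R x = 0}" by (rule poly_roots_finite[OF R0])
    have sub: "t ` {0..M} \<subseteq> {x. poly R x = 0}"
    proof
      fix y assume "y \<in> t ` {0..M}"
      then obtain r where "r \<le> M" "y = t r" by auto
      then show "y \<in> {x. poly R x = 0}" using Qc[of r] by (simp add: R_def)
    qed
    have "card (t ` {0..M}) \<le> card {x. poly R x = 0}" by (rule card_mono[OF fin sub])
    moreover have "card (t ` {0..M}) = Suc M" using card_image[OF inj] by simp
    ultimately show False using c0 dR by linarith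
  qed
  then have "Q = [:poly Q (t 0):]" unfolding R_def by simp
  then have "pderiv Q = pderiv [:poly Q (t 0):]" by simp
  also have "\<dots> = 0" by (simp add: pderiv_pCons)
  finally show ?thesis using QP eP by simp
qed

lemma moment_exist_1d:
  fixes t :: "nat \<Rightarrow> real"
  assumes mono: "strict_mono t" and M: "1 \<le> M"
  shows "\<exists>e. poly1 c (M - 1) e \<and> (\<forall>i'. 1 \<le> i' \<and> i' \<le> M \<longrightarrow> integral {t (i' - 1)..t i'} e = (if i' = i then 1 else 0))"
proof -
  have inj: "inj_on t {0..M}"
    using mono strict_mono_imp_inj_on by blast
  obtain Q where dQ: "degree Q \<le> M" and vQ: "\<And>r. r \<le> M \<Longrightarrow> poly Q (t r) = (if i \<le> r then 1 else 0)"
    using lagrange[OF inj, of "\<lambda>r. if i \<le> r then 1 else 0"] by blast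
  have "degree (pderiv Q) \<le> M - 1" using dQ by (simp add: degree_pderiv)
  then have "poly1 c (M - 1) (poly (pderiv Q))"
    by (rule poly_to_poly1)
  moreover have "integral {t (i' - 1)..t i'} (poly (pderiv Q)) = (if i' = i then 1 else 0)"
    if "1 \<le> i'" "i' \<le> M" for i'
  proof -
    have le: "t (i' - 1) \<le> t i'" using mono by (simp add: strict_mono_less_eq)
    have "integral {t (i' - 1)..t i'} (poly (pderiv Q)) = poly Q (t i') - poly Q (t (i' - 1))"
      by (rule ftc_poly[OF le])
    also have "\<dots> = (if i \<le> i' then 1 else 0) - (if i \<le> i' - 1 then 1 else 0)"
      using that by (simp add: vQ)
    also have "\<dots> = (if i' = i then 1 else 0)" using that by auto
    finally show ?thesis .
  qed
  ultimately show ?thesis by blast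
qed

definition mono_t :: "real^'d \<Rightarrow> ('d \<Rightarrow> nat) \<Rightarrow> real^'d \<Rightarrow> real" where
  "mono_t c \<alpha> z = (\<Prod>k\<in>UNIV. (z$k - c$k) ^ (\<alpha> k))"

lemma tensor_poly_alt: "tensor_poly c N P \<longleftrightarrow>
  (\<exists>coef. \<forall>z. P z = (\<Sum>\<alpha>\<in>Pi\<^sub>E UNIV (\<lambda>_. {..N}). coef \<alpha> * mono_t c \<alpha> z))"
proof -
  have "{\<alpha> :: 'a \<Rightarrow> nat. \<forall>k. \<alpha> k \<le> N} = Pi\<^sub>E UNIV (\<lambda>_. {..N})"
    by (auto simp: PiE_UNIV_domain)
  then show ?thesis by (simp add: tensor_poly_def mono_t_def)
qed

lemma tensor_poly_sum:
  assumes fin: "finite I" and P: "\<And>i. i \<in> I \<Longrightarrow> tensor_poly c N (P i)"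
  shows "tensor_poly c N (\<lambda>z. \<Sum>i\<in>I. w i * P i z)"
proof -
  have "\<forall>i\<in>I. \<exists>cf. \<forall>z. P i z = (\<Sum>\<alpha>\<in>Pi\<^sub>E UNIV (\<lambda>_. {..N}). cf \<alpha> * mono_t c \<alpha> z)"
    using P by (simp add: tensor_poly_alt)
  then obtain cf where cf: "\<And>i z. i \<in> I \<Longrightarrow> P i z = (\<Sum>\<alpha>\<in>Pi\<^sub>E UNIV (\<lambda>_. {..N}). cf i \<alpha> * mono_t c \<alpha> z)"
    by metis
  have "(\<Sum>i\<in>I. w i * P i z) = (\<Sum>\<alpha>\<in>Pi\<^sub>E UNIV (\<lambda>_. {..N}). (\<Sum>i\<in>I. w i * cf i \<alpha>) * mono_t c \<alpha> z)" for z
  proof -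
    have "(\<Sum>i\<in>I. w i * P i z) = (\<Sum>i\<in>I. \<Sum>\<alpha>\<in>Pi\<^sub>E UNIV (\<lambda>_. {..N}). w i * cf i \<alpha> * mono_t c \<alpha> z)"
      by (intro sum.cong refl) (simp add: cf sum_distrib_left mult.assoc)
    also have "\<dots> = (\<Sum>\<alpha>\<in>Pi\<^sub>E UNIV (\<lambda>_. {..N}). \<Sum>i\<in>I. w i * cf i \<alpha> * mono_t c \<alpha> z)"
      by (rule sum.swap)
    also have "\<dots> = (\<Sum>\<alpha>\<in>Pi\<^sub>E UNIV (\<lambda>_. {..N}). (\<Sum>i\<in>I. w i * cf i \<alpha>) * mono_t c \<alpha> z)"
      by (simp add: sum_distrib_right)
    finally show ?thesis .
  qed
  then show ?thesis unfolding tensor_poly_alt by (intro exI[of _ "\<lambda>\<alpha>. \<Sum>i\<in>I. w i * cf i \<alpha>"]) blast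
qed

lemma poly1_cont: "poly1 c N e \<Longrightarrow> continuous_on A e"
proof -
  assume "poly1 c N e"
  then obtain a where "\<And>x. e x = (\<Sum>j\<le>N. a j * (x - c)^j)" by (auto simp: poly1_def)
  then have "e = (\<lambda>x. \<Sum>j\<le>N. a j * (x - c)^j)" by auto
  then show ?thesis by (simp add: continuous_intros)
qed

lemma poly1_sum:
  assumes fin: "finite I" and P: "\<And>i. i \<in> I \<Longrightarrow> poly1 c N (f i)"
  shows "poly1 c N (\<lambda>x. \<Sum>i\<in>I. w i * f i x)"
proof -
  have "\<forall>i\<in>I. \<exists>a. \<forall>x. f i x = (\<Sum>j\<le>N. a j * (x - c)^j)"
    using P by (simp add: poly1_def)
  then obtain a where a: "\<And>i x. i \<in> I \<Longrightarrow> f i x = (\<Sum>j\<le>N. a i j * (x - c)^j)"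
    by metis
  have "(\<Sum>i\<in>I. w i * f i x) = (\<Sum>j\<le>N. (\<Sum>i\<in>I. w i * a i j) * (x - c)^j)" for x
  proof -
    have "(\<Sum>i\<in>I. w i * f i x) = (\<Sum>i\<in>I. \<Sum>j\<le>N. w i * a i j * (x - c)^j)"
      by (intro sum.cong refl) (simp add: a sum_distrib_left mult.assoc)
    also have "\<dots> = (\<Sum>j\<le>N. \<Sum>i\<in>I. w i * a i j * (x - c)^j)"
      by (rule sum.swap)
    also have "\<dots> = (\<Sum>j\<le>N. (\<Sum>i\<in>I. w i * a i j) * (x - c)^j)"
      by (simp add: sum_distrib_right)
    finally show ?thesis .
  qed
  then show ?thesis unfolding poly1_def by (intro exI[of _ "\<lambda>j. \<Sum>i\<in>I. w i * a i j"]) blast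
qed

lemma poly1_diff:
  assumes "poly1 c N f" "poly1 c N g"
  shows "poly1 c N (\<lambda>x. f x - g x)"
proof -
  obtain a where a: "\<And>x. f x = (\<Sum>j\<le>N. a j * (x - c)^j)" using assms(1) by (auto simp: poly1_def)
  obtain b where b: "\<And>x. g x = (\<Sum>j\<le>N. b j * (x - c)^j)" using assms(2) by (auto simp: poly1_def)
  have "f x - g x = (\<Sum>j\<le>N. (a j - b j) * (x - c)^j)" for x
    by (simp add: a b sum_subtractf left_diff_distrib)
  then show ?thesis unfolding poly1_def by (intro exI[of _ "\<lambda>j. a j - b j"]) blast
qed

lemma poly1_pow:
  assumes "j \<le> N"
  shows "poly1 c N (\<lambda>x. (x - c)^j)"
proof -
  have "(x - c)^j = (\<Sum>j'\<le>N. (if j' = j then 1 else 0) * (x - c)^j')" for x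
  proof -
    have "(\<Sum>j'\<le>N. (if j' = j then 1 else 0) * (x - c)^j') = (\<Sum>j'\<le>N. if j' = j then (x - c)^j else 0)"
      by (intro sum.cong) auto
    also have "\<dots> = (x - c)^j" using assms by simp
    finally show ?thesis by simp
  qed
  then show ?thesis unfolding poly1_def by (intro exI[of _ "\<lambda>j'. if j' = j then 1 else 0"]) blast
qed

lemma moment_unique:
  fixes l s c :: "real^'d" and h :: "real^'d \<Rightarrow> real"
  assumes spos: "\<forall>k. 0 < s$k"
  shows "\<exists>!P. tensor_poly c (2^n - 1) P \<and> (\<forall>B\<in>dyadic_boxes l s n. integral B P = integral B h)"
proof -
  define M where "M = (2::nat)^n"
  have M1: "1 \<le> M" by (simp add: M_def)
  define t where "t k r = l$k + real r * s$k / 2^n" for k r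
  have smt: "strict_mono (t k)" for k
    unfolding strict_mono_def t_def using spos
    by (auto intro!: divide_strict_right_mono mult_strict_right_mono)
  define Idx where "Idx = Pi\<^sub>E UNIV (\<lambda>_::'d. {1..M})"
  have finIdx: "finite Idx" unfolding Idx_def by (rule finite_PiE) auto
  have inIdx: "\<iota> \<in> Idx \<longleftrightarrow> (\<forall>k. 1 \<le> \<iota> k \<and> \<iota> k \<le> M)" for \<iota>
    by (auto simp: Idx_def PiE_UNIV_domain)
  define bx where "bx \<iota> = cbox (\<chi> k. t k (\<iota> k - 1)) (\<chi> k. t k (\<iota> k))" for \<iota>
  have bxeq: "bx \<iota> = cbox (\<chi> k. l$k + (real (\<iota> k) - 1) * s$k / 2^n) (\<chi> k. l$k + real (\<iota> k) * s$k / 2^n)"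
    if "\<iota> \<in> Idx" for \<iota>
  proof -
    have "\<And>k. real (\<iota> k - 1) = real (\<iota> k) - 1" using that inIdx by (simp add: of_nat_diff)
    then show ?thesis by (simp add: bx_def t_def)
  qed
  have DB: "dyadic_boxes l s n = bx ` Idx"
    unfolding dyadic_boxes_def using bxeq inIdx M_def by auto
  have "\<forall>k. \<forall>i. \<exists>e. poly1 (c$k) (M - 1) e \<and> (\<forall>i'. 1 \<le> i' \<and> i' \<le> M \<longrightarrow> integral {t k (i' - 1)..t k i'} e = (if i' = i then 1 else 0))"
    using moment_exist_1d[OF smt M1] by blast
  then have "\<forall>k. \<exists>ek. \<forall>i. poly1 (c$k) (M - 1) (ek i) \<and> (\<forall>i'. 1 \<le> i' \<and> i' \<le> M \<longrightarrow> integral {t k (i' - 1)..t k i'} (ek i) = (if i' = i then 1 else 0))"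
    by (intro allI choice) blast
  then obtain e where e: "\<And>k i. poly1 (c$k) (M - 1) (e k i) \<and> (\<forall>i'. 1 \<le> i' \<and> i' \<le> M \<longrightarrow> integral {t k (i' - 1)..t k i'} (e k i) = (if i' = i then 1 else 0))"
    by metis
  have e1: "poly1 (c$k) (M - 1) (e k i)" for k i using e by blast
  have e2: "integral {t k (i' - 1)..t k i'} (e k i) = (if i' = i then 1 else 0)" if "1 \<le> i'" "i' \<le> M" for k i i'
    using e that by blast
  have conte: "continuous_on A (e k i)" for A k i using poly1_cont[OF e1] .
  define E where "E \<iota> z = (\<Prod>k\<in>UNIV. e k (\<iota> k) (z$k))" for \<iota> z
  have contE: "continuous_on A (E \<iota>)" for A \<iota>
    unfolding E_def by (intro continuous_intros continuous_on_compose2[OF conte[of UNIV]]) auto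
  have intE_int: "(E \<iota>) integrable_on bx \<iota>'" for \<iota> \<iota>'
    unfolding bx_def by (rule integrable_continuous[OF contE])
  have intE: "integral (bx \<iota>') (E \<iota>) = (if \<iota>' = \<iota> then 1 else 0)" if "\<iota>' \<in> Idx" for \<iota> \<iota>'
  proof -
    have "integral (bx \<iota>') (E \<iota>) = (\<Prod>k\<in>UNIV. integral {t k (\<iota>' k - 1)..t k (\<iota>' k)} (e k (\<iota> k)))"
      unfolding bx_def E_def
      using integral_unique[OF prod_integral_box[of "\<lambda>k. e k (\<iota> k)", OF conte]] by simp
    also have "\<dots> = (\<Prod>k\<in>UNIV. if \<iota>' k = \<iota> k then 1 else 0)"
      by (intro prod.cong refl e2) (use that inIdx in auto)
    also have "\<dots> = (if \<iota>' = \<iota> then 1 else 0)"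
    proof (cases "\<iota>' = \<iota>")
      case False
      then obtain k where "\<iota>' k \<noteq> \<iota> k" by auto
      then have "(\<Prod>k\<in>UNIV. if \<iota>' k = \<iota> k then 1 else (0::real)) = 0"
        by (intro prod_zero) auto
      then show ?thesis using False by simp
    qed simp
    finally show ?thesis .
  qed
  have coefl: "integral (bx \<iota>') D = \<gamma> \<iota>'"
    if D: "\<And>z. D z = (\<Sum>\<iota>\<in>Idx. \<gamma> \<iota> * E \<iota> z)" and "\<iota>' \<in> Idx" for D \<gamma> \<iota>'
  proof -
    have "D = (\<lambda>z. \<Sum>\<iota>\<in>Idx. \<gamma> \<iota> * E \<iota> z)" using D by auto
    moreover have "\<And>a. a \<in> Idx \<Longrightarrow> (\<lambda>z. \<gamma> a * E a z) integrable_on bx \<iota>'"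
      by (rule integrable_on_mult_right[OF intE_int])
    ultimately have "integral (bx \<iota>') D = (\<Sum>\<iota>\<in>Idx. integral (bx \<iota>') (\<lambda>z. \<gamma> \<iota> * E \<iota> z))"
      using integral_sum[OF finIdx, of "\<lambda>\<iota> z. \<gamma> \<iota> * E \<iota> z" "bx \<iota>'"] by simp
    also have "\<dots> = (\<Sum>\<iota>\<in>Idx. \<gamma> \<iota> * (if \<iota>' = \<iota> then 1 else 0))"
      by (intro sum.cong refl) (simp add: intE[OF \<open>\<iota>' \<in> Idx\<close>])
    also have "\<dots> = \<gamma> \<iota>'" using \<open>\<iota>' \<in> Idx\<close> finIdx by (simp add: if_distrib cong: if_cong)
    finally show ?thesis .
  qed
  have "\<forall>k i. \<exists>a. \<forall>x. e k i x = (\<Sum>j\<le>M - 1. a j * (x - c$k)^j)"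
    using e1 by (simp add: poly1_def)
  then have "\<forall>k. \<exists>ak. \<forall>i x. e k i x = (\<Sum>j\<le>M - 1. ak i j * (x - c$k)^j)"
    by (intro allI choice) blast
  then obtain a where a: "\<And>k i x. e k i x = (\<Sum>j\<le>M - 1. a k i j * (x - c$k)^j)"
    by metis
  have tensE: "tensor_poly c (M - 1) (E \<iota>)" for \<iota>
  proof -
    have "E \<iota> z = (\<Sum>\<alpha>\<in>Pi\<^sub>E UNIV (\<lambda>_. {..M - 1}). (\<Prod>k\<in>UNIV. a k (\<iota> k) (\<alpha> k)) * mono_t c \<alpha> z)" for z
    proof -
      have "E \<iota> z = (\<Prod>k\<in>UNIV. \<Sum>j\<le>M - 1. a k (\<iota> k) j * (z$k - c$k)^j)"
        by (simp add: E_def a)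
      also have "\<dots> = (\<Sum>\<alpha>\<in>Pi\<^sub>E UNIV (\<lambda>_. {..M - 1}). \<Prod>k\<in>UNIV. a k (\<iota> k) (\<alpha> k) * (z$k - c$k)^(\<alpha> k))"
        by (rule prod_sum_PiE) auto
      also have "\<dots> = (\<Sum>\<alpha>\<in>Pi\<^sub>E UNIV (\<lambda>_. {..M - 1}). (\<Prod>k\<in>UNIV. a k (\<iota> k) (\<alpha> k)) * mono_t c \<alpha> z)"
        by (simp add: mono_t_def prod.distrib)
      finally show ?thesis .
    qed
    then show ?thesis unfolding tensor_poly_alt
      by (intro exI[of _ "\<lambda>\<alpha>. \<Prod>k\<in>UNIV. a k (\<iota> k) (\<alpha> k)"]) blast
  qed
  define \<mu> where "\<mu> k j i = integral {t k (i - 1)..t k i} (\<lambda>x. (x - c$k)^j)" for k j i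
  have mon1: "(x - c$k)^j = (\<Sum>i\<in>{1..M}. \<mu> k j i * e k i x)" if "j \<le> M - 1" for x k j
  proof -
    define \<phi> where "\<phi> x = (x - c$k)^j - (\<Sum>i\<in>{1..M}. \<mu> k j i * e k i x)" for x
    have p1: "poly1 (c$k) (M - 1) \<phi>"
      unfolding \<phi>_def by (intro poly1_diff poly1_pow poly1_sum e1 that) auto
    have i0: "integral {t k (i' - 1)..t k i'} \<phi> = 0" if "1 \<le> i'" "i' \<le> M" for i'
    proof -
      have ipow: "(\<lambda>x. (x - c$k)^j) integrable_on {t k (i' - 1)..t k i'}"
        by (intro integrable_continuous_real continuous_intros)
      have ie: "(\<lambda>x. \<mu> k j i * e k i x) integrable_on {t k (i' - 1)..t k i'}" for i
        by (intro integrable_continuous_real continuous_intros conte)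
      have "integral {t k (i' - 1)..t k i'} \<phi> = \<mu> k j i' - (\<Sum>i\<in>{1..M}. \<mu> k j i * integral {t k (i' - 1)..t k i'} (e k i))"
      proof -
        have isum: "integral {t k (i' - 1)..t k i'} (\<lambda>x. \<Sum>i\<in>{1..M}. \<mu> k j i * e k i x)
             = (\<Sum>i\<in>{1..M}. integral {t k (i' - 1)..t k i'} (\<lambda>x. \<mu> k j i * e k i x))"
          by (rule integral_sum) (simp_all only: finite_atLeastAtMost ie)
        have isum2: "(\<lambda>x. \<Sum>i\<in>{1..M}. \<mu> k j i * e k i x) integrable_on {t k (i' - 1)..t k i'}"
          by (rule integrable_sum) (simp_all only: finite_atLeastAtMost ie)
        show ?thesis unfolding \<phi>_def integral_diff[OF ipow isum2] isum
          by (simp add: \<mu>_def)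
      qed
      also have "\<dots> = \<mu> k j i' - (\<Sum>i\<in>{1..M}. \<mu> k j i * (if i' = i then 1 else 0))"
        using e2[OF that] by simp
      also have "\<dots> = 0" using that by (simp add: if_distrib cong: if_cong)
      finally show ?thesis .
    qed
    have "\<phi> x = 0" by (rule moment_uniq_1d[OF smt M1 p1 i0])
    then show ?thesis by (simp add: \<phi>_def)
  qed
  have rep: "\<exists>\<gamma>. \<forall>z. D z = (\<Sum>\<iota>\<in>Idx. \<gamma> \<iota> * E \<iota> z)" if tD: "tensor_poly c (M - 1) D" for D
  proof -
    obtain coef where cf: "\<And>z. D z = (\<Sum>\<alpha>\<in>Pi\<^sub>E UNIV (\<lambda>_. {..M - 1}). coef \<alpha> * mono_t c \<alpha> z)"
      using tD unfolding tensor_poly_alt by blast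
    have mt: "mono_t c \<alpha> z = (\<Sum>\<iota>\<in>Idx. (\<Prod>k\<in>UNIV. \<mu> k (\<alpha> k) (\<iota> k)) * E \<iota> z)"
      if "\<alpha> \<in> Pi\<^sub>E UNIV (\<lambda>_. {..M - 1})" for \<alpha> z
    proof -
      have "mono_t c \<alpha> z = (\<Prod>k\<in>UNIV. \<Sum>i\<in>{1..M}. \<mu> k (\<alpha> k) i * e k i (z$k))"
        unfolding mono_t_def using that by (intro prod.cong refl mon1) auto
      also have "\<dots> = (\<Sum>\<iota>\<in>Idx. \<Prod>k\<in>UNIV. \<mu> k (\<alpha> k) (\<iota> k) * e k (\<iota> k) (z$k))"
        unfolding Idx_def by (rule prod_sum_PiE) auto
      also have "\<dots> = (\<Sum>\<iota>\<in>Idx. (\<Prod>k\<in>UNIV. \<mu> k (\<alpha> k) (\<iota> k)) * E \<iota> z)"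
        by (simp add: E_def prod.distrib)
      finally show ?thesis .
    qed
    have "D z = (\<Sum>\<iota>\<in>Idx. (\<Sum>\<alpha>\<in>Pi\<^sub>E UNIV (\<lambda>_. {..M - 1}). coef \<alpha> * (\<Prod>k\<in>UNIV. \<mu> k (\<alpha> k) (\<iota> k))) * E \<iota> z)" for z
    proof -
      have "D z = (\<Sum>\<alpha>\<in>Pi\<^sub>E UNIV (\<lambda>_. {..M - 1}). \<Sum>\<iota>\<in>Idx. coef \<alpha> * (\<Prod>k\<in>UNIV. \<mu> k (\<alpha> k) (\<iota> k)) * E \<iota> z)"
        unfolding cf by (intro sum.cong refl) (simp add: mt sum_distrib_left mult.assoc)
      also have "\<dots> = (\<Sum>\<iota>\<in>Idx. \<Sum>\<alpha>\<in>Pi\<^sub>E UNIV (\<lambda>_. {..M - 1}). coef \<alpha> * (\<Prod>k\<in>UNIV. \<mu> k (\<alpha> k) (\<iota> k)) * E \<iota> z)"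
        by (rule sum.swap)
      also have "\<dots> = (\<Sum>\<iota>\<in>Idx. (\<Sum>\<alpha>\<in>Pi\<^sub>E UNIV (\<lambda>_. {..M - 1}). coef \<alpha> * (\<Prod>k\<in>UNIV. \<mu> k (\<alpha> k) (\<iota> k))) * E \<iota> z)"
        by (simp add: sum_distrib_right)
      finally show ?thesis .
    qed
    then show ?thesis
      by (intro exI[of _ "\<lambda>\<iota>. \<Sum>\<alpha>\<in>Pi\<^sub>E UNIV (\<lambda>_. {..M - 1}). coef \<alpha> * (\<Prod>k\<in>UNIV. \<mu> k (\<alpha> k) (\<iota> k))"]) blast
  qed
  define P0 where "P0 z = (\<Sum>\<iota>\<in>Idx. integral (bx \<iota>) h * E \<iota> z)" for z
  have P0t: "tensor_poly c (M - 1) P0"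
    unfolding P0_def[abs_def] by (rule tensor_poly_sum[OF finIdx tensE])
  have P0i: "\<forall>B\<in>dyadic_boxes l s n. integral B P0 = integral B h"
    unfolding DB using coefl[of P0 "\<lambda>\<iota>. integral (bx \<iota>) h"] by (auto simp: P0_def)
  have uniq: "P = P0" if tP: "tensor_poly c (M - 1) P" and iP: "\<forall>B\<in>dyadic_boxes l s n. integral B P = integral B h" for P
  proof -
    obtain \<gamma> where g: "\<And>z. P z = (\<Sum>\<iota>\<in>Idx. \<gamma> \<iota> * E \<iota> z)" using rep[OF tP] by blast
    have "\<gamma> \<iota> = integral (bx \<iota>) h" if "\<iota> \<in> Idx" for \<iota>
      using coefl[OF g that] iP that DB by auto
    then show ?thesis by (auto simp: fun_eq_iff g P0_def intro!: sum.cong)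
  qed
  show ?thesis unfolding M_def[symmetric]
    using P0t P0i uniq by blast
qed

lemma block_moment_prop:
  fixes l s c :: "real^'d" and h :: "real^'d \<Rightarrow> real"
  assumes spos: "\<forall>k. 0 < s$k" and B: "B \<in> dyadic_boxes l s n"
  shows "integral B (block_moment_poly l s c n h) = integral B h"
proof -
  have "tensor_poly c (2^n - 1) (block_moment_poly l s c n h) \<and>
        (\<forall>B\<in>dyadic_boxes l s n. integral B (block_moment_poly l s c n h) = integral B h)"
    unfolding block_moment_poly_def by (rule theI'[OF moment_unique[OF spos]])
  then show ?thesis using B by blast
qed

lemma gamma_conv:
  fixes l s c :: "real^'d" and h :: "real^'d \<Rightarrow> real"
  assumes spos: "\<forall>k. 0 < s$k" and cont: "continuous_on (cbox l (l + s)) h"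
  shows "gamma_cesaro l s (\<lambda>n. block_moment_poly l s c n h) h"
  unfolding gamma_cesaro_def
proof (intro ballI allI impI)
  fix z \<epsilon> assume zQ: "z \<in> cbox l (l + s)" and e: "(0::real) < \<epsilon>"
  have uc: "uniformly_continuous_on (cbox l (l + s)) h"
    by (rule compact_uniformly_continuous[OF cont compact_cbox])
  obtain d where d: "d > 0" and dh: "\<And>x x'. x \<in> cbox l (l + s) \<Longrightarrow> x' \<in> cbox l (l + s) \<Longrightarrow> dist x' x < d \<Longrightarrow> dist (h x') (h x) < \<epsilon>/2"
    using uniformly_continuous_onE[OF uc, of "\<epsilon>/2"] e by auto
  define S where "S = (\<Sum>k\<in>UNIV. s$k)"
  obtain N where N: "S / d < 2^N" using real_arch_pow[of 2 "S / d"] by auto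
  show "\<exists>N. \<forall>n\<ge>N. \<forall>B\<in>dyadic_boxes l s n. z \<in> B \<longrightarrow> \<bar>integral B (block_moment_poly l s c n h) / Henstock_Kurzweil_Integration.content B - h z\<bar> < \<epsilon>"
  proof (intro exI[of _ N] allI impI ballI)
    fix n B assume nN: "N \<le> n" and B: "B \<in> dyadic_boxes l s n" and zB: "z \<in> B"
    obtain i where Bi: "B = cbox (\<chi> k. l$k + (real (i k) - 1) * s$k / 2^n) (\<chi> k. l$k + real (i k) * s$k / 2^n)"
      and i: "\<forall>k. 1 \<le> i k \<and> i k \<le> 2^n"
      using B unfolding dyadic_boxes_def by blast
    define u where "u = (\<chi> k. l$k + (real (i k) - 1) * s$k / 2^n)"
    define v where "v = (\<chi> k. l$k + real (i k) * s$k / 2^n)"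
    have Buv: "B = cbox u v" using Bi u_def v_def by simp
    have vu: "v$k - u$k = s$k / 2^n" for k
      by (simp add: u_def v_def field_simps)
    have ul: "l$k \<le> u$k" for k
    proof -
      have "0 \<le> (real (i k) - 1) * s$k / 2^n" using i spos by (simp add: field_simps)
      then show ?thesis by (simp add: u_def)
    qed
    have vl: "v$k \<le> l$k + s$k" for k
    proof -
      have "real (i k) \<le> 2^n" using i by (metis of_nat_le_iff of_nat_numeral of_nat_power)
      then have "real (i k) * s$k \<le> 2^n * s$k" using spos by (intro mult_right_mono) (auto simp: less_imp_le)
      then have "real (i k) * s$k / 2^n \<le> s$k" by (simp add: field_simps)
      then show ?thesis by (simp add: v_def)
    qed
    have BQ: "B \<subseteq> cbox l (l + s)"
      unfolding Buv using ul vl by (auto simp: mem_box_cart) (meson order_trans)+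
    have Sn: "S / 2^n < d"
    proof -
      have "(2::real)^N \<le> 2^n" using nN by (intro power_increasing) auto
      then have "S / d < 2^n" using N by linarith
      then show ?thesis using d by (simp add: field_simps)
    qed
    have close: "dist x z < d" if "x \<in> B" for x
    proof -
      have "dist x z \<le> (\<Sum>k\<in>UNIV. \<bar>(x - z)$k\<bar>)" unfolding dist_norm by (rule norm_le_l1_cart)
      also have "\<dots> \<le> (\<Sum>k\<in>UNIV. s$k / 2^n)"
      proof (rule sum_mono)
        fix k
        have "u$k \<le> x$k" "x$k \<le> v$k" "u$k \<le> z$k" "z$k \<le> v$k"
          using that zB unfolding Buv by (auto simp: mem_box_cart)
        then show "\<bar>(x - z)$k\<bar> \<le> s$k / 2^n" using vu[of k] by auto
      qed
      also have "\<dots> = S / 2^n" by (simp add: S_def sum_divide_distrib)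
      finally show ?thesis using Sn by linarith
    qed
    have hb: "norm (h x - h z) \<le> \<epsilon>/2" if "x \<in> cbox u v" for x
      using dh[of z x] that close zQ BQ unfolding Buv by (auto simp: dist_real_def less_imp_le)
    have uv: "u$k \<le> v$k" for k
    proof -
      have "0 \<le> s$k / 2^n" using spos by (simp add: less_imp_le)
      then show ?thesis using vu[of k] by linarith
    qed
    have cpos: "0 < Henstock_Kurzweil_Integration.content (cbox u v)"
    proof -
      have "u \<in> cbox u v" using uv by (simp add: mem_box_cart)
      then have "Henstock_Kurzweil_Integration.content (cbox u v) = (\<Prod>k\<in>UNIV. v$k - u$k)" by (intro content_cbox_cart) blast
      also have "\<dots> > 0" using vu spos by (intro prod_pos) simp
      finally show ?thesis .
    qed
    have hint: "h integrable_on cbox u v"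
      by (rule integrable_continuous[OF continuous_on_subset[OF cont]]) (use BQ Buv in simp)
    have hi: "((\<lambda>x. h x - h z) has_integral (integral (cbox u v) h - Henstock_Kurzweil_Integration.content (cbox u v) * h z)) (cbox u v)"
      using has_integral_diff[OF integrable_integral[OF hint] has_integral_const[of "h z" u v]] by simp
    have "norm (integral (cbox u v) h - Henstock_Kurzweil_Integration.content (cbox u v) * h z) \<le> \<epsilon>/2 * Henstock_Kurzweil_Integration.content (cbox u v)"
      by (rule has_integral_bound[OF _ hi hb]) (use e in simp)
    then have "\<bar>integral (cbox u v) h / Henstock_Kurzweil_Integration.content (cbox u v) - h z\<bar> \<le> \<epsilon>/2"
      using cpos by (simp add: field_simps abs_le_iff)
    moreover have "integral B (block_moment_poly l s c n h) = integral B h"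
      by (rule block_moment_prop[OF spos B])
    ultimately show "\<bar>integral B (block_moment_poly l s c n h) / Henstock_Kurzweil_Integration.content B - h z\<bar> < \<epsilon>"
      using e Buv by simp
  qed
qed

lemma ift_local:
  fixes f :: "(real^2) \<times> (real^2) \<Rightarrow> real^2"
    and f' :: "(real^2) \<times> (real^2) \<Rightarrow> (((real^2) \<times> (real^2)) \<Rightarrow>\<^sub>L (real^2))"
    and a b :: "real^2"
  assumes deriv: "\<And>z. (f has_derivative blinfun_apply (f' z)) (at z)"
    and cont_deriv: "continuous_on UNIV f'"
    and zero: "f (a, b) = 0"
    and jac: "det (\<chi> i j. blinfun_apply (f' (a, b)) (0, axis j 1) $ i) \<noteq> 0"
  shows "\<exists>y e. e > 0 \<and> continuous_on (ball a e) y \<and> (\<forall>x\<in>ball a e. f (x, y x) = 0 \<and> dist (y x) b < 1)"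
proof -
  define F where "F z = (fst z, f z)" for z
  define L where "L z = (\<lambda>h. (fst h, blinfun_apply (f' z) h))" for z
  have blL: "bounded_linear (L z)" for z
    unfolding L_def by (intro bounded_linear_Pair bounded_linear_fst blinfun.bounded_linear_right)
  define F' where "F' z = Blinfun (L z)" for z
  have F'app: "blinfun_apply (F' z) = L z" for z by (simp add: F'_def bounded_linear_Blinfun_apply[OF blL])
  have derF: "(F has_derivative blinfun_apply (F' z)) (at z)" if "z \<in> UNIV" for z
    unfolding F'app L_def F_def[abs_def]
    by (intro has_derivative_Pair has_derivative_fst[OF has_derivative_ident] deriv)
  have contF': "continuous_on UNIV F'"
  proof -
    have dd: "dist (F' z) (F' w) \<le> dist (f' z) (f' w)" for z w
    proof -
      have "norm (F' z - F' w) \<le> norm (f' z - f' w)"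
      proof (rule norm_blinfun_bound)
        show "0 \<le> norm (f' z - f' w)" by simp
        fix h
        have "blinfun_apply (F' z - F' w) h = (0, blinfun_apply (f' z - f' w) h)"
          by (simp add: blinfun.diff_left F'app L_def)
        then have "norm (blinfun_apply (F' z - F' w) h) = norm (blinfun_apply (f' z - f' w) h)"
          by (simp add: norm_Pair)
        also have "\<dots> \<le> norm (f' z - f' w) * norm h" by (rule norm_blinfun)
        finally show "norm (blinfun_apply (F' z - F' w) h) \<le> norm (f' z - f' w) * norm h" .
      qed
      then show ?thesis by (simp add: dist_norm)
    qed
    show ?thesis unfolding continuous_on_iff
    proof (intro ballI allI impI)
      fix x :: "(real^2) \<times> (real^2)" and e :: real assume "x \<in> UNIV" "0 < e"
      then obtain d where "d > 0" "\<forall>x'\<in>UNIV. dist x' x < d \<longrightarrow> dist (f' x') (f' x) < e"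
        using cont_deriv unfolding continuous_on_iff by blast
      then show "\<exists>d>0. \<forall>x'\<in>UNIV. dist x' x < d \<longrightarrow> dist (F' x') (F' x) < e"
        using dd le_less_trans by blast
    qed
  qed
  define g where "g v = blinfun_apply (f' (a,b)) (0, v)" for v :: "real^2"
  have blg: "bounded_linear g"
    unfolding g_def
    by (rule bounded_linear_compose[OF blinfun.bounded_linear_right])
       (intro bounded_linear_Pair bounded_linear_zero bounded_linear_ident)
  then have lin_g: "linear g" by (rule bounded_linear.linear)
  have "matrix g = (\<chi> i j. blinfun_apply (f' (a, b)) (0, axis j 1) $ i)"
    by (simp add: matrix_def g_def)
  then have inj_g: "inj g" using det_nz_iff_inj[OF lin_g] jac by simp
  have injL: "inj (L (a,b))"
  proof (rule injI)
    fix h1 h2 assume eq: "L (a,b) h1 = L (a,b) h2"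
    obtain u1 v1 where h1: "h1 = (u1, v1)" by (cases h1)
    obtain u2 v2 where h2: "h2 = (u2, v2)" by (cases h2)
    have u: "u1 = u2" using eq by (simp add: L_def h1 h2)
    have "blinfun_apply (f' (a,b)) (u1, v1) = blinfun_apply (f' (a,b)) (u1, v2)"
      using eq by (simp add: L_def h1 h2 u)
    then have "blinfun_apply (f' (a,b)) ((u1, v1) - (u1, v2)) = 0"
      by (simp only: blinfun.diff_right) simp
    moreover have "blinfun_apply (f' (a,b)) (0, 0) = 0"
      by (metis blinfun.zero_right zero_prod_def)
    ultimately have "g (v1 - v2) = g 0" by (simp add: g_def)
    then have "v1 = v2" using inj_g by (simp add: inj_eq)
    then show "h1 = h2" using u h1 h2 by simp
  qed
  have linL: "linear (L (a,b))" using blL bounded_linear.linear by blast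
  obtain gi where lgi: "linear gi" and giL: "gi \<circ> L (a,b) = id"
    using linear_injective_left_inverse[OF linL injL] by blast
  define invf where "invf = Blinfun gi"
  have blgi: "bounded_linear gi" using lgi linear_conv_bounded_linear by blast
  have invf: "invf o\<^sub>L F' (a,b) = id_blinfun"
  proof (rule blinfun_eqI)
    fix i
    have "gi (L (a,b) i) = i" using giL by (metis comp_apply id_apply)
    then show "blinfun_apply (invf o\<^sub>L F' (a, b)) i = blinfun_apply id_blinfun i"
      by (simp add: invf_def bounded_linear_Blinfun_apply[OF blgi] F'app)
  qed
  have "\<exists>U' V G. open U' \<and> (a,b) \<in> U' \<and> open V \<and> F (a,b) \<in> V \<and> homeomorphism U' V F G"
  proof (rule inverse_function_theorem[OF open_UNIV derF contF' UNIV_I invf])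
    fix U' V G G'
    assume "open U'" "U' \<subseteq> UNIV" "(a,b) \<in> U'" "open V" "F (a,b) \<in> V" "homeomorphism U' V F G"
    then show ?thesis by blast
  qed simp
  then obtain U' V G where U': "open U'" "(a,b) \<in> U'" and V: "open V" "F (a,b) \<in> V"
      and hom: "homeomorphism U' V F G" by blast
  have FG: "F (G w) = w" if "w \<in> V" for w using hom that by (simp add: homeomorphism_def)
  have GF: "G (F z) = z" if "z \<in> U'" for z using hom that by (simp add: homeomorphism_def)
  have contG: "continuous_on V G" using hom by (simp add: homeomorphism_def)
  have Fab: "F (a,b) = (a, 0)" by (simp add: F_def zero)
  define W where "W = (\<lambda>x. (x, 0::real^2)) -` V"
  have oW: "open W" unfolding W_def by (rule open_vimage[OF V(1)]) (intro continuous_intros)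
  define y where "y x = snd (G (x, 0))" for x
  have Gx: "G (x, 0) = (x, y x)" and fy: "f (x, y x) = 0" if "x \<in> W" for x
  proof -
    have "F (G (x, 0)) = (x, 0)" using FG that by (simp add: W_def)
    then have "fst (G (x,0)) = x" "f (G (x,0)) = 0" by (simp_all add: F_def)
    then show "G (x, 0) = (x, y x)" by (simp add: y_def prod_eq_iff)
    then show "f (x, y x) = 0" using \<open>f (G (x,0)) = 0\<close> by simp
  qed
  have aW: "a \<in> W" using V(2) Fab by (simp add: W_def)
  have ya: "y a = b" using GF[OF U'(2)] Fab by (simp add: y_def)
  have cy: "continuous_on W y"
    unfolding y_def
    by (intro continuous_intros continuous_on_compose2[OF contG]) (auto simp: W_def)
  have oW': "open (W \<inter> y -` ball b 1)" by (rule continuous_open_preimage[OF cy oW open_ball])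
  have "a \<in> W \<inter> y -` ball b 1" using aW ya by simp
  then obtain e where e: "e > 0" "ball a e \<subseteq> W \<inter> y -` ball b 1"
    using oW' open_contains_ball by blast
  have "continuous_on (ball a e) y" using continuous_on_subset[OF cy] e by blast
  moreover have "\<forall>x\<in>ball a e. f (x, y x) = 0 \<and> dist (y x) b < 1"
    using e fy by (auto simp: dist_commute)
  ultimately show ?thesis using e by blast
qed

theorem theorem2:
  fixes f :: "(real^2) \<times> (real^2) \<Rightarrow> real^2"
    and f' :: "(real^2) \<times> (real^2) \<Rightarrow> (((real^2) \<times> (real^2)) \<Rightarrow>\<^sub>L (real^2))"
    and a b :: "real^2"
  assumes deriv: "\<And>z. (f has_derivative blinfun_apply (f' z)) (at z)"
    and cont_deriv: "continuous_on UNIV f'"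
    and zero: "f (a, b) = 0"
    and jac: "det (\<chi> i j. blinfun_apply (f' (a, b)) (0, axis j 1) $ i) \<noteq> 0"
  shows "\<exists>(lR :: real^2) (sR :: real^2) (lV :: real^2) (sV :: real^2) (j :: 2) (j' :: 2)
            (p :: real^3 \<Rightarrow> real) (q :: real^2 \<Rightarrow> real).
     (\<forall>k. 0 < sR$k) \<and> (\<forall>k. 0 < sV$k) \<and>
     a \<in> cbox lR (lR + sR) \<and>
     (\<forall>k. b$k \<in> {lV$k .. lV$k + sV$k}) \<and>
     j \<noteq> j' \<and>
     continuous_on {ext3 x t | x t. x \<in> cbox lR (lR + sR) \<and> t \<in> {lV$j' .. lV$j' + sV$j'}} p \<and>
     continuous_on (cbox lR (lR + sR)) q \<and>
     (\<forall>x\<in>cbox lR (lR + sR). \<forall>t\<in>{lV$j' .. lV$j' + sV$j'}.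
        p (ext3 x t) \<in> {lV$j .. lV$j + sV$j}) \<and>
     (\<forall>x\<in>cbox lR (lR + sR). q x \<in> {lV$j' .. lV$j' + sV$j'}) \<and>
     (\<forall>x\<in>cbox lR (lR + sR).
        f (x, \<chi> i. if i = j' then q x else p (ext3 x (q x))) = 0) \<and>
     gamma_cesaro (ext3 lR (lV$j')) (ext3 sR (sV$j'))
       (\<lambda>n. block_moment_poly (ext3 lR (lV$j')) (ext3 sR (sV$j')) (ext3 a (b$j')) n p) p \<and>
     gamma_cesaro lR sR (\<lambda>m. block_moment_poly lR sR a m q) q"
proof -
  obtain y e where e: "e > 0" and cy: "continuous_on (ball a e) y"
    and yp: "\<forall>x\<in>ball a e. f (x, y x) = 0 \<and> dist (y x) b < 1"
    using ift_local[OF deriv cont_deriv zero jac] by blast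
  define \<delta> where "\<delta> = e / 4"
  have d0: "0 < \<delta>" using e by (simp add: \<delta>_def)
  define lR :: "real^2" where "lR = (\<chi> k. a$k - \<delta>)"
  define sR :: "real^2" where "sR = (\<chi> k. 2 * \<delta>)"
  define lV :: "real^2" where "lV = (\<chi> k. b$k - 1)"
  define sV :: "real^2" where "sV = (\<chi> k. 2)"
  define R where "R = cbox lR (lR + sR)"
  have memR: "x \<in> R \<longleftrightarrow> (\<forall>k. a$k - \<delta> \<le> x$k \<and> x$k \<le> a$k + \<delta>)" for x
    by (auto simp: R_def mem_box_cart lR_def sR_def add.commute)
  have Rball: "R \<subseteq> ball a e"
  proof
    fix x assume "x \<in> R"
    then have xk: "\<bar>(a - x)$k\<bar> \<le> \<delta>" for k using memR by (simp add: abs_le_iff) (smt (verit))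
    have "dist a x \<le> (\<Sum>k\<in>UNIV. \<bar>(a - x)$k\<bar>)" unfolding dist_norm by (rule norm_le_l1_cart)
    also have "\<dots> \<le> \<delta> + \<delta>" unfolding sum_2 using xk[of 1] xk[of 2] by simp
    also have "\<dots> < e" using e by (simp add: \<delta>_def)
    finally show "x \<in> ball a e" by simp
  qed
  have cyR: "continuous_on R y" using continuous_on_subset[OF cy Rball] .
  have fR: "f (x, y x) = 0" if "x \<in> R" for x using yp Rball that by blast
  have yV: "y x $ k \<in> {lV$k .. lV$k + sV$k}" if "x \<in> R" for x k
  proof -
    have "dist (y x) b < 1" using yp Rball that by blast
    moreover have "\<bar>(y x - b)$k\<bar> \<le> norm (y x - b)" by (rule component_le_norm_cart)
    ultimately have "\<bar>y x $ k - b $ k\<bar> < 1" by (simp add: dist_norm)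
    then show ?thesis by (simp add: lV_def sV_def abs_less_iff)
  qed
  define q where "q x = y x $ 1" for x
  define proj :: "real^3 \<Rightarrow> real^2" where "proj w = w$1 *\<^sub>R axis 1 1 + w$2 *\<^sub>R axis 2 1" for w
  have proj1: "proj w $ 1 = w $ 1" and proj2: "proj w $ 2 = w $ 2" for w
    by (simp_all add: proj_def axis_def)
  have proj_ext: "proj (ext3 x t) = x" for x t
    by (simp add: vec_eq_iff forall_2 proj1 proj2 ext3_def)
  define p where "p w = y (proj w) $ 2" for w
  have cyk: "continuous_on R (\<lambda>x. y x $ k)" for k
    by (intro continuous_intros cyR)
  have cp: "continuous_on {w. proj w \<in> R} p"
    unfolding p_def
    by (rule continuous_on_compose2[OF cyk]) (auto simp: proj_def intro!: continuous_intros)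
  have cq: "continuous_on R q" unfolding q_def by (rule cyk)
  have yvec: "(\<chi> i. if i = 1 then q x else p (ext3 x (q x))) = y x" for x
    by (simp add: vec_eq_iff forall_2 q_def p_def proj_ext)
  define l3 where "l3 = ext3 lR (lV$1)"
  define s3 where "s3 = ext3 sR (sV$1)"
  have s3pos: "\<forall>k. 0 < s3$k"
    using d0 by (simp add: forall_3 s3_def ext3_def sR_def sV_def)
  have box3: "cbox l3 (l3 + s3) \<subseteq> {w. proj w \<in> R}"
  proof
    fix w assume "w \<in> cbox l3 (l3 + s3)"
    then have "l3$1 \<le> w$1" "w$1 \<le> l3$1 + s3$1" "l3$2 \<le> w$2" "w$2 \<le> l3$2 + s3$2"
      by (auto simp: mem_box_cart)
    then show "w \<in> {w. proj w \<in> R}"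
      by (simp add: R_def mem_box_cart forall_2 proj1 proj2 l3_def s3_def ext3_def)
  qed
  have sRpos: "\<forall>k. 0 < sR$k" using d0 by (simp add: sR_def)
  have aR: "a \<in> R" using d0 by (simp add: memR)
  show ?thesis
  proof (rule exI[of _ lR], rule exI[of _ sR], rule exI[of _ lV], rule exI[of _ sV], rule exI[of _ "2::2"],
      rule exI[of _ "1::2"], rule exI[of _ p], rule exI[of _ q], intro conjI)
    show "\<forall>k. 0 < sR$k" by (rule sRpos)
    show "\<forall>k. 0 < sV$k" by (simp add: sV_def)
    show "a \<in> cbox lR (lR + sR)" using aR by (simp add: R_def)
    show "\<forall>k. b$k \<in> {lV$k .. lV$k + sV$k}" by (simp add: lV_def sV_def)
    show "(2::2) \<noteq> 1" by simp
    show "continuous_on {ext3 x t | x t. x \<in> cbox lR (lR + sR) \<and> t \<in> {lV$1 .. lV$1 + sV$1}} p"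
      by (rule continuous_on_subset[OF cp]) (auto simp: proj_ext R_def)
    show "continuous_on (cbox lR (lR + sR)) q" using cq by (simp add: R_def)
    show "\<forall>x\<in>cbox lR (lR + sR). \<forall>t\<in>{lV$1 .. lV$1 + sV$1}. p (ext3 x t) \<in> {lV$2 .. lV$2 + sV$2}"
      using yV by (simp add: p_def proj_ext R_def)
    show "\<forall>x\<in>cbox lR (lR + sR). q x \<in> {lV$1 .. lV$1 + sV$1}"
      using yV by (simp add: q_def R_def)
    show "\<forall>x\<in>cbox lR (lR + sR). f (x, \<chi> i. if i = 1 then q x else p (ext3 x (q x))) = 0"
      using fR by (simp add: yvec R_def)
    show "gamma_cesaro (ext3 lR (lV$1)) (ext3 sR (sV$1))
       (\<lambda>n. block_moment_poly (ext3 lR (lV$1)) (ext3 sR (sV$1)) (ext3 a (b$1)) n p) p"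
      unfolding l3_def[symmetric] s3_def[symmetric]
      by (rule gamma_conv[OF s3pos continuous_on_subset[OF cp box3]])
    show "gamma_cesaro lR sR (\<lambda>m. block_moment_poly lR sR a m q) q"
      by (rule gamma_conv[OF sRpos]) (use cq in \<open>simp add: R_def\<close>)
  qed
qed

end
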